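(* Let $B$ be a finite set of Boolean functions and $\langle W,D\rangle$ a $B$-default theory. If $[B]\subseteq \mathrm{R}_1$, then $\langle W,D\rangle$ has a unique stable extension. If $[B]\subseteq\mathrm{M}$, then $\langle W,D\rangle$ has at most one stable extension.
   Context: A clone is a set of Boolean functions containing all projections and closed under composition; $[B]$ is the smallest clone containing $B$. $\mathrm{R}_1$ is the clone of $1$-reproducing functions ($f(1,\dots,1)=1$); $\mathrm{M}$ is the clone of monotone functions. For a finite set $B$ of Boolean functions (possibly including constants $0,1$), a $B$-formula uses only connectives from $B$. A $B$-default theory $\langle W,D\rangle$ consists of a finite set $W$ of $B$-formulae and a finite set $D$ of rules $\frac{\alpha:\beta}{\gamma}$ with $B$-formulae $\alpha,\beta,\gamma$. With $\mathrm{Th}(A)=\{\varphi\mid A\models\varphi\}$, for a set $E$ of formulae $\Gamma(E)$ is the smallest set with $W\subseteq\Gamma(E)$, $\Gamma(E)=\mathrm{Th}(\Gamma(E))$, and $\gamma\in\Gamma(E)$ whenever $\frac{\alpha:\beta}{\gamma}\in D$, $\alpha\in\Gamma(E)$, $\neg\beta\notin E$. A stable extension is a fixed point $E=\Gamma(E)$. *)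

theory Defs
  imports Main
begin

text \<open>A Boolean function is represented by its arity n together with a map on
  bool lists; only its values on lists of length n are meaningful.
  Constants 0 and 1 are the functions of arity 0.\<close>
type_synonym bfun = "nat \<times> (bool list \<Rightarrow> bool)"

datatype 'v formula = Var 'v | App bfun "'v formula list"

fun wf_formula :: "'v formula \<Rightarrow> bool" where
  "wf_formula (Var v) = True"
| "wf_formula (App f args) = (length args = fst f \<and> (\<forall>a\<in>set args. wf_formula a))"

fun is_B_formula :: "bfun set \<Rightarrow> 'v formula \<Rightarrow> bool" where
  "is_B_formula B (Var v) = True"
| "is_B_formula B (App f args) =
     (f \<in> B \<and> length args = fst f \<and> (\<forall>a\<in>set args. is_B_formula B a))"

fun eval :: "('v \<Rightarrow> bool) \<Rightarrow> 'v formula \<Rightarrow> bool" where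
  "eval \<sigma> (Var v) = \<sigma> v"
| "eval \<sigma> (App f args) = snd f (map (eval \<sigma>) args)"

definition neg_fun :: bfun where
  "neg_fun = (1, \<lambda>xs. \<not> hd xs)"

definition Neg :: "'v formula \<Rightarrow> 'v formula" where
  "Neg \<phi> = App neg_fun [\<phi>]"

definition entails :: "'v formula set \<Rightarrow> 'v formula \<Rightarrow> bool" where
  "entails A \<phi> = (\<forall>\<sigma>. (\<forall>\<psi>\<in>A. eval \<sigma> \<psi>) \<longrightarrow> eval \<sigma> \<phi>)"

definition Th :: "'v formula set \<Rightarrow> 'v formula set" where
  "Th A = {\<phi>. wf_formula \<phi> \<and> entails A \<phi>}"

definition proj :: "nat \<Rightarrow> nat \<Rightarrow> bfun" where
  "proj n i = (n, \<lambda>xs. xs ! i)"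

definition compose :: "bfun \<Rightarrow> nat \<Rightarrow> bfun list \<Rightarrow> bfun" where
  "compose f n gs = (n, \<lambda>xs. snd f (map (\<lambda>g. snd g xs) gs))"

definition is_clone :: "bfun set \<Rightarrow> bool" where
  "is_clone C =
     ((\<forall>n i. i < n \<longrightarrow> proj n i \<in> C) \<and>
      (\<forall>f gs n. f \<in> C \<longrightarrow> length gs = fst f \<longrightarrow> (\<forall>g\<in>set gs. g \<in> C \<and> fst g = n)
          \<longrightarrow> compose f n gs \<in> C))"

definition clone_gen :: "bfun set \<Rightarrow> bfun set" where
  "clone_gen B = \<Inter>{C. is_clone C \<and> B \<subseteq> C}"

definition R1 :: "bfun set" where
  "R1 = {f. snd f (replicate (fst f) True) = True}"

definition Mon :: "bfun set" where
  "Mon = {f. \<forall>xs ys. length xs = fst f \<longrightarrow> length ys = fst f \<longrightarrow> list_all2 (\<le>) xs ys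
                 \<longrightarrow> snd f xs \<le> snd f ys}"

text \<open>Default logic. A default rule (alpha, beta, gamma) stands for alpha:beta / gamma.\<close>
definition Gamma :: "'v formula set \<Rightarrow> ('v formula \<times> 'v formula \<times> 'v formula) set
                      \<Rightarrow> 'v formula set \<Rightarrow> 'v formula set" where
  "Gamma W D E = \<Inter>{S. W \<subseteq> S \<and> Th S = S \<and>
      (\<forall>(\<alpha>,\<beta>,\<gamma>)\<in>D. \<alpha> \<in> S \<and> Neg \<beta> \<notin> E \<longrightarrow> \<gamma> \<in> S)}"

definition stable_extension :: "'v formula set \<Rightarrow> ('v formula \<times> 'v formula \<times> 'v formula) set
                      \<Rightarrow> 'v formula set \<Rightarrow> bool" where
  "stable_extension W D E = (E = Gamma W D E)"

end

theory Submission
  imports Defs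
begin

lemma B_wf: "is_B_formula B \<phi> \<Longrightarrow> wf_formula \<phi>"
  by (induction \<phi>) auto

lemma B_sub_clone: "B \<subseteq> clone_gen B"
  unfolding clone_gen_def by blast

lemma R1_eval: "B \<subseteq> R1 \<Longrightarrow> is_B_formula B \<phi> \<Longrightarrow> eval (\<lambda>_. True) \<phi>"
proof (induction \<phi>)
  case (Var v) then show ?case by simp
next
  case (App f args)
  have "map (eval (\<lambda>_. True)) args = map (\<lambda>_. True) args"
    using App by (intro map_cong) auto
  also have "\<dots> = replicate (fst f) True" using App.prems by (simp add: map_replicate_const)
  finally show ?case using App.prems by (auto simp: R1_def)
qed

lemma Mon_eval: "B \<subseteq> Mon \<Longrightarrow> is_B_formula B \<phi> \<Longrightarrow> eval \<sigma> \<phi> \<Longrightarrow> eval (\<lambda>_. True) \<phi>"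
proof (induction \<phi>)
  case (Var v) then show ?case by simp
next
  case (App f args)
  have fM: "f \<in> Mon" and len: "length args = fst f" using App.prems by auto
  have "list_all2 (\<le>) (map (eval \<sigma>) args) (map (eval (\<lambda>_. True)) args)"
    using App by (auto simp: list_all2_conv_all_nth le_bool_def)
  then have "snd f (map (eval \<sigma>) args) \<le> snd f (map (eval (\<lambda>_. True)) args)"
    using fM len unfolding Mon_def mem_Collect_eq by (metis length_map)
  then show ?case using App.prems by (auto simp: le_bool_def)
qed

lemma Th_mono: "A \<subseteq> A' \<Longrightarrow> Th A \<subseteq> Th A'"
  unfolding Th_def entails_def by blast

lemma Th_sub_wf: "Th A \<subseteq> {\<phi>. wf_formula \<phi>}"
  unfolding Th_def by blast

lemma Th_wf: "Th {\<phi>. wf_formula \<phi>} = {\<phi>. wf_formula \<phi>}"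
  unfolding Th_def entails_def by auto

lemma Th_Th: "Th (Th A) \<subseteq> Th A"
  unfolding Th_def entails_def by auto

lemma Th_incl: "\<forall>\<phi>\<in>A. wf_formula \<phi> \<Longrightarrow> A \<subseteq> Th A"
  unfolding Th_def entails_def by auto

definition M1 :: "'v formula set" where
  "M1 = {\<phi>. wf_formula \<phi> \<and> eval (\<lambda>_. True) \<phi>}"

lemma M1_models: "\<forall>\<psi>\<in>(M1::'v formula set). eval \<sigma> \<psi> \<Longrightarrow> \<sigma> = (\<lambda>_. True)"
proof
  fix v :: 'v assume h: "\<forall>\<psi>\<in>(M1::'v formula set). eval \<sigma> \<psi>"
  have "Var v \<in> (M1::'v formula set)" by (simp add: M1_def)
  then show "\<sigma> v = True" using h by fastforce
qed

lemma Th_M1: "Th (M1 :: 'v formula set) = M1"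
proof
  show "Th M1 \<subseteq> M1" unfolding Th_def entails_def M1_def by auto
next
  show "M1 \<subseteq> (Th M1 :: 'v formula set)"
    unfolding Th_def entails_def using M1_models by (fastforce simp: M1_def)
qed

lemma Neg_notin_M1: "eval (\<lambda>_. True) \<beta> \<Longrightarrow> Neg \<beta> \<notin> M1"
  by (simp add: M1_def Neg_def neg_fun_def)

lemma Gamma_sub:
  assumes "W \<subseteq> S" "Th S = S" "\<forall>(\<alpha>,\<beta>,\<gamma>)\<in>D. \<alpha> \<in> S \<and> Neg \<beta> \<notin> E \<longrightarrow> \<gamma> \<in> S"
  shows "Gamma W D E \<subseteq> S"
  using assms unfolding Gamma_def by blast

lemma Gamma_W: "W \<subseteq> Gamma W D E"
  unfolding Gamma_def by blast

lemma Gamma_Th: "Th (Gamma W D E) \<subseteq> Gamma W D E"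
proof -
  have "Th (Gamma W D E) \<subseteq> S" if "S \<in> {S. W \<subseteq> S \<and> Th S = S \<and>
      (\<forall>(\<alpha>,\<beta>,\<gamma>)\<in>D. \<alpha> \<in> S \<and> Neg \<beta> \<notin> E \<longrightarrow> \<gamma> \<in> S)}" for S
  proof -
    have "Gamma W D E \<subseteq> S" using that unfolding Gamma_def by blast
    then have "Th (Gamma W D E) \<subseteq> Th S" by (rule Th_mono)
    then show ?thesis using that by simp
  qed
  then show ?thesis unfolding Gamma_def by blast
qed

lemma Gamma_rule:
  assumes r: "(\<alpha>,\<beta>,\<gamma>) \<in> D" and a: "\<alpha> \<in> Gamma W D E" and n: "Neg \<beta> \<notin> E"
  shows "\<gamma> \<in> Gamma W D E"
  unfolding Gamma_def
proof (rule InterI)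
  fix S assume S: "S \<in> {S. W \<subseteq> S \<and> Th S = S \<and>
      (\<forall>(\<alpha>,\<beta>,\<gamma>)\<in>D. \<alpha> \<in> S \<and> Neg \<beta> \<notin> E \<longrightarrow> \<gamma> \<in> S)}"
  then have "\<alpha> \<in> S" using a unfolding Gamma_def by blast
  moreover have "\<forall>(\<alpha>,\<beta>,\<gamma>)\<in>D. \<alpha> \<in> S \<and> Neg \<beta> \<notin> E \<longrightarrow> \<gamma> \<in> S" using S by blast
  ultimately show "\<gamma> \<in> S" using r n by (auto dest!: bspec[where x="(\<alpha>,\<beta>,\<gamma>)"])
qed

lemma Gamma_anti:
  assumes h: "\<forall>(\<alpha>,\<beta>,\<gamma>)\<in>D. Neg \<beta> \<notin> E' \<longrightarrow> Neg \<beta> \<notin> E"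
  shows "Gamma W D E' \<subseteq> Gamma W D E"
  unfolding Gamma_def
proof (rule Inter_anti_mono, rule subsetI)
  fix S assume S: "S \<in> {S. W \<subseteq> S \<and> Th S = S \<and>
      (\<forall>(\<alpha>,\<beta>,\<gamma>)\<in>D. \<alpha> \<in> S \<and> Neg \<beta> \<notin> E \<longrightarrow> \<gamma> \<in> S)}"
  have "\<forall>(\<alpha>,\<beta>,\<gamma>)\<in>D. \<alpha> \<in> S \<and> Neg \<beta> \<notin> E' \<longrightarrow> \<gamma> \<in> S"
  proof (clarify)
    fix \<alpha> \<beta> \<gamma> assume "(\<alpha>,\<beta>,\<gamma>) \<in> D" "\<alpha> \<in> S" "Neg \<beta> \<notin> E'"
    then show "\<gamma> \<in> S" using S h by (auto dest!: bspec[where x="(\<alpha>,\<beta>,\<gamma>)"])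
  qed
  then show "S \<in> {S. W \<subseteq> S \<and> Th S = S \<and>
      (\<forall>(\<alpha>,\<beta>,\<gamma>)\<in>D. \<alpha> \<in> S \<and> Neg \<beta> \<notin> E' \<longrightarrow> \<gamma> \<in> S)}" using S by blast
qed

lemma Gamma_cong:
  assumes "\<forall>(\<alpha>,\<beta>,\<gamma>)\<in>D. (Neg \<beta> \<in> E') = (Neg \<beta> \<in> E)"
  shows "Gamma W D E' = Gamma W D E"
proof
  show "Gamma W D E' \<subseteq> Gamma W D E" using assms by (intro Gamma_anti) auto
  show "Gamma W D E \<subseteq> Gamma W D E'" using assms by (intro Gamma_anti) auto
qed

lemma key_Mon:
  assumes BM: "B \<subseteq> Mon"
    and W: "\<forall>\<phi>\<in>W. is_B_formula B \<phi>"
    and D: "\<forall>(\<alpha>,\<beta>,\<gamma>)\<in>D. is_B_formula B \<alpha> \<and> is_B_formula B \<beta> \<and> is_B_formula B \<gamma>"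
  shows "Gamma W D E \<subseteq> M1 \<or> Gamma W D E = {\<phi>. wf_formula \<phi>}"
proof -
  define G where "G = Gamma W D E"
  define X where "X = {\<phi>\<in>G. is_B_formula B \<phi>}"
  have Xwf: "\<forall>\<phi>\<in>X. wf_formula \<phi>" using B_wf X_def by blast
  have GTh: "Th G \<subseteq> G" unfolding G_def by (rule Gamma_Th)
  have WG: "W \<subseteq> G" unfolding G_def by (rule Gamma_W)
  have "G \<subseteq> Th X" unfolding G_def
  proof (rule Gamma_sub)
    show "W \<subseteq> Th X" using WG W Th_incl[OF Xwf] unfolding X_def by blast
    show "Th (Th X) = Th X" using Th_Th Th_incl[of "Th X"] Th_sub_wf by blast
    show "\<forall>(\<alpha>,\<beta>,\<gamma>)\<in>D. \<alpha> \<in> Th X \<and> Neg \<beta> \<notin> E \<longrightarrow> \<gamma> \<in> Th X"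
    proof (clarify)
      fix \<alpha> \<beta> \<gamma> assume r: "(\<alpha>,\<beta>,\<gamma>) \<in> D" and a: "\<alpha> \<in> Th X" and n: "Neg \<beta> \<notin> E"
      have "Th X \<subseteq> G" using Th_mono[of X G] GTh X_def by blast
      then have "\<alpha> \<in> G" using a by blast
      then have "\<gamma> \<in> G" using Gamma_rule[OF r _ n] G_def by blast
      then have "\<gamma> \<in> X" using r D X_def by blast
      then show "\<gamma> \<in> Th X" using Th_incl[OF Xwf] by blast
    qed
  qed
  show ?thesis
  proof (cases "\<exists>\<sigma>. \<forall>\<psi>\<in>X. eval \<sigma> \<psi>")
    case True
    then obtain \<sigma> where "\<forall>\<psi>\<in>X. eval \<sigma> \<psi>" by blast
    then have "\<forall>\<psi>\<in>X. eval (\<lambda>_. True) \<psi>" using Mon_eval[OF BM] X_def by blast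
    then have "Th X \<subseteq> M1" unfolding Th_def entails_def M1_def by blast
    then show ?thesis using \<open>G \<subseteq> Th X\<close> G_def by blast
  next
    case False
    then have "Th X = {\<phi>. wf_formula \<phi>}" unfolding Th_def entails_def by auto
    moreover have "Th X \<subseteq> G" using Th_mono[of X G] GTh X_def by blast
    ultimately show ?thesis using \<open>G \<subseteq> Th X\<close> G_def by blast
  qed
qed

theorem lemma5p2:
  fixes B :: "bfun set"
    and W :: "'v formula set"
    and D :: "('v formula \<times> 'v formula \<times> 'v formula) set"
  assumes "finite B"
    and "finite W" and "finite D"
    and "\<forall>\<phi>\<in>W. is_B_formula B \<phi>"
    and "\<forall>(\<alpha>,\<beta>,\<gamma>)\<in>D. is_B_formula B \<alpha> \<and> is_B_formula B \<beta> \<and> is_B_formula B \<gamma>"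
  shows "(clone_gen B \<subseteq> R1 \<longrightarrow> (\<exists>!E. stable_extension W D E)) \<and>
         (clone_gen B \<subseteq> Mon \<longrightarrow>
            (\<forall>E1 E2. stable_extension W D E1 \<longrightarrow> stable_extension W D E2 \<longrightarrow> E1 = E2))"
proof (intro conjI impI allI)
  assume "clone_gen B \<subseteq> R1"
  then have BR: "B \<subseteq> R1" using B_sub_clone by blast
  have sub: "Gamma W D E \<subseteq> (M1 :: 'v formula set)" for E
  proof (rule Gamma_sub)
    show "W \<subseteq> M1" using assms(4) R1_eval[OF BR] B_wf unfolding M1_def by blast
    show "Th M1 = M1" by (rule Th_M1)
    show "\<forall>(\<alpha>,\<beta>,\<gamma>)\<in>D. \<alpha> \<in> M1 \<and> Neg \<beta> \<notin> E \<longrightarrow> \<gamma> \<in> M1"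
      using assms(5) R1_eval[OF BR] B_wf unfolding M1_def by blast
  qed
  have cong: "Gamma W D E = Gamma W D M1" if "E \<subseteq> M1" for E
  proof (rule Gamma_cong)
    show "\<forall>(\<alpha>,\<beta>,\<gamma>)\<in>D. (Neg \<beta> \<in> E) = (Neg \<beta> \<in> M1)"
      using assms(5) R1_eval[OF BR] Neg_notin_M1 that by blast
  qed
  show "\<exists>!E. stable_extension W D E"
  proof
    show "stable_extension W D (Gamma W D M1)"
      unfolding stable_extension_def using cong[OF sub] by simp
  next
    fix E assume "stable_extension W D E"
    then have "E = Gamma W D E" by (simp add: stable_extension_def)
    then show "E = Gamma W D M1" using cong sub by metis
  qed
next
  fix E1 E2
  assume "clone_gen B \<subseteq> Mon" and s1: "stable_extension W D E1" and s2: "stable_extension W D E2"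
  then have BM: "B \<subseteq> Mon" using B_sub_clone by blast
  have e1: "E1 = Gamma W D E1" and e2: "E2 = Gamma W D E2"
    using s1 s2 by (simp_all add: stable_extension_def)
  have k1: "E1 \<subseteq> M1 \<or> E1 = {\<phi>. wf_formula \<phi>}" using key_Mon[OF BM assms(4,5), of E1] e1 by simp
  have k2: "E2 \<subseteq> M1 \<or> E2 = {\<phi>. wf_formula \<phi>}" using key_Mon[OF BM assms(4,5), of E2] e2 by simp
  have notM: "\<not> {\<phi>. wf_formula \<phi>} \<subseteq> (M1 :: 'v formula set)"
  proof
    assume "{\<phi>. wf_formula \<phi>} \<subseteq> (M1 :: 'v formula set)"
    moreover have "Neg (Var undefined :: 'v formula) \<in> {\<phi>. wf_formula \<phi>}"
      by (simp add: Neg_def neg_fun_def)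
    ultimately show False using Neg_notin_M1[of "Var undefined"] by auto
  qed
  have charM: "(Neg \<beta> \<in> E) = (\<not> eval (\<lambda>_. True) \<beta>)"
    if E: "E = Gamma W D E" "E \<subseteq> M1" and b: "is_B_formula B \<beta>" for E \<beta>
  proof
    assume "Neg \<beta> \<in> E" then show "\<not> eval (\<lambda>_. True) \<beta>" using E Neg_notin_M1 by blast
  next
    assume ne: "\<not> eval (\<lambda>_. True) \<beta>"
    have "\<not> eval \<sigma> \<beta>" for \<sigma> using Mon_eval[OF BM b] ne by blast
    then have "Neg \<beta> \<in> Th E" using B_wf[OF b]
      by (simp add: Th_def entails_def Neg_def neg_fun_def)
    then show "Neg \<beta> \<in> E" using Gamma_Th[of W D E] E(1) by auto
  qed
  have allin: "\<forall>(\<alpha>,\<beta>,\<gamma>)\<in>D. Neg \<beta> \<in> {\<phi>. wf_formula \<phi>}"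
    using assms(5) B_wf by (fastforce simp: Neg_def neg_fun_def)
  have mixed: False if "E \<subseteq> M1" "E = Gamma W D E" "E' = {\<phi>. wf_formula \<phi>}" "E' = Gamma W D E'" for E E'
  proof -
    have "Gamma W D E' \<subseteq> Gamma W D E" using allin that(3) by (intro Gamma_anti) auto
    then show False using that notM by auto
  qed
  show "E1 = E2"
  proof (cases "E1 \<subseteq> M1")
    case c1: True
    show ?thesis
    proof (cases "E2 \<subseteq> M1")
      case True
      have "\<forall>(\<alpha>,\<beta>,\<gamma>)\<in>D. (Neg \<beta> \<in> E1) = (Neg \<beta> \<in> E2)"
        using charM[OF e1 c1] charM[OF e2 True] assms(5) by fastforce
      then show ?thesis using Gamma_cong[of D E1 E2 W] e1 e2 by simp
    next
      case False
      then show ?thesis using k2 mixed c1 e1 e2 by blast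
    qed
  next
    case False
    then have "E1 = {\<phi>. wf_formula \<phi>}" using k1 by blast
    then show ?thesis using k2 mixed e1 e2 by blast
  qed
qed

end
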